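(* Let $\Sigma$ be a finite alphabet, $S=s_0\cdots s_{m-1}\in\Sigma^m$, and $a,a'\in\Sigma^m$ with $\mathrm{rep}_{\mathrm{Sub}(S)}(a)=\mathrm{rep}_{\mathrm{Sub}(S)}(a')$. Then $f^S_{\mathrm{BMH}}(a)=f^S_{\mathrm{BMH}}(a')$ and $g^S_{\mathrm{BMH}}(a)=g^S_{\mathrm{BMH}}(a')$.
   Context: $\mathrm{Sub}(S)$ is the set of all substrings of $S$, including $\varepsilon$; $\mathrm{rep}_{\mathrm{Sub}(S)}(a)$ is the longest suffix of $a$ that is a substring of $S$. For a window $w=w_0\cdots w_{m-1}$: the Boyer–Moore–Horspool cost is $f^S_{\mathrm{BMH}}(w)=m$ if $w=S$ and otherwise $\min\{i\in\{1,\dots,m\}: w_{m-i}\ne s_{m-i}\}$. The BMH shift is $g^S_{\mathrm{BMH}}(w)=bc^S(w,1)$, where $bc^S(w,1)=m$ if $w_{m-1}\notin\{s_0,\dots,s_{m-2}\}$ and otherwise $\min\{k\in\{1,\dots,m-1\}: w_{m-1}=s_{m-1-k}\}$. *)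

theory Defs
  imports Main "HOL-Library.Sublist"
begin

definition Sub :: "'a list \<Rightarrow> 'a list set" where
  "Sub S = {x. sublist x S}"

definition rep_Sub :: "'a list \<Rightarrow> 'a list \<Rightarrow> 'a list" where
  "rep_Sub S a = drop (LEAST k. drop k a \<in> Sub S) a"

definition f_BMH :: "'a list \<Rightarrow> 'a list \<Rightarrow> nat" where
  "f_BMH S w = (let m = length S in
     if w = S then m
     else (LEAST i. 1 \<le> i \<and> i \<le> m \<and> w ! (m - i) \<noteq> S ! (m - i)))"

definition bc1 :: "'a list \<Rightarrow> 'a list \<Rightarrow> nat" where
  "bc1 S w = (let m = length S in
     if w ! (m - 1) \<notin> {S ! j | j. j < m - 1} then m
     else (LEAST k. 1 \<le> k \<and> k \<le> m - 1 \<and> w ! (m - 1) = S ! (m - 1 - k)))"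

definition g_BMH :: "'a list \<Rightarrow> 'a list \<Rightarrow> nat" where
  "g_BMH S w = bc1 S w"

end

theory Submission
  imports Defs
begin

lemma least_eq_upto:
  fixes P Q :: "nat \<Rightarrow> bool"
  assumes "\<forall>i\<le>N. P i = Q i" "P j" "j \<le> N"
  shows "(LEAST i. P i) = (LEAST i. Q i)"
proof -
  have lp: "(LEAST i. P i) \<le> j" using assms(2) by (rule Least_le[of P])
  have pl: "P (LEAST i. P i)" using assms(2) by (rule LeastI[of P])
  hence q: "Q (LEAST i. P i)" using assms lp by auto
  have "\<forall>i < (LEAST i. P i). \<not> Q i"
  proof (intro allI impI)
    fix i assume "i < (LEAST i. P i)"
    hence "\<not> P i" "i \<le> N" using not_less_Least[of i P] lp assms(3) by auto
    thus "\<not> Q i" using assms(1) by auto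
  qed
  hence "(LEAST i. Q i) = (LEAST i. P i)" using q
    by (intro Least_equality) (auto simp: not_less[symmetric])
  thus ?thesis by simp
qed

lemma drop_in_Sub: "drop (length S) (a::'a list) \<in> Sub S \<or> length a \<le> length S \<longrightarrow> drop (length a) a \<in> Sub S"
  by (simp add: Sub_def)

theorem lemma18:
  fixes \<Sigma> :: "'a set" and S a a' :: "'a list" and m :: nat
  assumes "finite \<Sigma>"
    and "S \<in> lists \<Sigma>" and "length S = m"
    and "a \<in> lists \<Sigma>" and "length a = m"
    and "a' \<in> lists \<Sigma>" and "length a' = m"
    and "rep_Sub S a = rep_Sub S a'"
  shows "f_BMH S a = f_BMH S a' \<and> g_BMH S a = g_BMH S a'"
proof -
  define k where "k = (LEAST k. drop k a \<in> Sub S)"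
  define k' where "k' = (LEAST k. drop k a' \<in> Sub S)"
  have e0: "drop m a \<in> Sub S" using assms(5) by (simp add: Sub_def)
  have e0': "drop m a' \<in> Sub S" using assms(7) by (simp add: Sub_def)
  have km: "k \<le> m" unfolding k_def using e0 by (rule Least_le)
  have km': "k' \<le> m" unfolding k'_def using e0' by (rule Least_le)
  have dk: "drop k a = drop k' a'" using assms(8) by (simp add: rep_Sub_def k_def k'_def)
  hence "m - k = m - k'" using assms(5,7) by (metis length_drop)
  hence kk: "k' = k" using km km' by linarith
  have agree: "\<And>j. k \<le> j \<Longrightarrow> j < m \<Longrightarrow> a ! j = a' ! j"
  proof -
    fix j assume "k \<le> j" "j < m"
    have "drop k a ! (j - k) = drop k a' ! (j - k)" using dk kk by simp
    thus "a ! j = a' ! j" using \<open>k \<le> j\<close> \<open>j < m\<close> assms(5,7) by simp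
  qed
  show ?thesis
  proof (cases "k = 0")
    case True
    hence "a = a'" using dk kk by simp
    thus ?thesis by simp
  next
    case False
    have notin: "drop (k-1) a \<notin> Sub S" unfolding k_def
      using False k_def not_less_Least[of "k-1" "\<lambda>k. drop k a \<in> Sub S"] by auto
    have notin': "drop (k-1) a' \<notin> Sub S" unfolding k'_def
      using False kk k'_def not_less_Least[of "k-1" "\<lambda>k. drop k a' \<in> Sub S"] by auto
    have neS: "a \<noteq> S" using notin by (auto simp: Sub_def)
    have neS': "a' \<noteq> S" using notin' by (auto simp: Sub_def)
    have sufS: "\<And>x. x \<in> lists UNIV \<Longrightarrow> True" by simp
    have mis: "\<And>b. length b = m \<Longrightarrow> drop (k-1) b \<notin> Sub S \<Longrightarrow> \<not> (\<exists>i\<le>m-k. 1 \<le> i \<and> i \<le> m \<and> b ! (m - i) \<noteq> S ! (m - i))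
        \<Longrightarrow> b ! (k-1) \<noteq> S ! (k-1)"
    proof
      fix b :: "'a list" assume l: "length b = m" and n: "drop (k-1) b \<notin> Sub S"
        and h: "\<not> (\<exists>i\<le>m-k. 1 \<le> i \<and> i \<le> m \<and> b ! (m - i) \<noteq> S ! (m - i))"
        and eq: "b ! (k-1) = S ! (k-1)"
      have "\<forall>j. k - 1 \<le> j \<and> j < m \<longrightarrow> b ! j = S ! j"
      proof (intro allI impI)
        fix j assume j: "k - 1 \<le> j \<and> j < m"
        show "b ! j = S ! j"
        proof (cases "j = k - 1")
          case True thus ?thesis using eq by simp
        next
          case False
          hence "m - (m - j) = j" "1 \<le> m - j" "m - j \<le> m - k" "m - j \<le> m" using j by auto
          thus ?thesis using h \<open>m - j \<le> m\<close> by (metis (no_types, lifting))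
        qed
      qed
      hence "drop (k-1) b = drop (k-1) S"
        using l assms(3) by (intro nth_equalityI) auto
      moreover have "drop (k-1) S \<in> Sub S" by (simp add: Sub_def)
      ultimately show False using n by simp
    qed
    define P where "P b i = (1 \<le> i \<and> i \<le> m \<and> b ! (m - i) \<noteq> S ! (m - i))" for b i
    have Pag: "\<And>i. i \<le> m - k \<Longrightarrow> P a i = P a' i"
    proof -
      fix i assume i: "i \<le> m - k"
      show "P a i = P a' i"
      proof (cases "1 \<le> i")
        case True
        hence "k \<le> m - i" "m - i < m" using i km by auto
        thus ?thesis using agree unfolding P_def by simp
      next
        case False thus ?thesis unfolding P_def by simp
      qed
    qed
    have fl: "(LEAST i. P a i) = (LEAST i. P a' i)"
    proof (cases "\<exists>i\<le>m-k. P a i")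
      case True
      then obtain j where "j \<le> m - k" "P a j" by blast
      thus ?thesis using Pag by (intro least_eq_upto[where N="m-k" and j=j]) auto
    next
      case F: False
      hence F': "\<not> (\<exists>i\<le>m-k. P a' i)" using Pag by auto
      have "a ! (k-1) \<noteq> S ! (k-1)" using mis[OF assms(5) notin] F unfolding P_def by blast
      moreover have "a' ! (k-1) \<noteq> S ! (k-1)" using mis[OF assms(7) notin'] F' unfolding P_def by blast
      moreover have "m - (m - k + 1) = k - 1" using False km by simp
      ultimately have "P a (m-k+1)" "P a' (m-k+1)" using False km unfolding P_def by auto
      moreover have "\<forall>i\<le>m-k+1. P a i = P a' i"
        using Pag calculation by (auto simp: le_Suc_eq)
      ultimately show ?thesis by (intro least_eq_upto[where N="m-k+1" and j="m-k+1"]) auto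
    qed
    have f: "f_BMH S a = f_BMH S a'"
      using fl neS neS' assms(3) unfolding f_BMH_def P_def by (simp add: Let_def)
    have g: "g_BMH S a = g_BMH S a'"
    proof (cases "k < m")
      case True
      hence "a ! (m-1) = a' ! (m-1)" using agree by simp
      thus ?thesis using assms(3) by (auto simp add: g_BMH_def bc1_def Let_def)
    next
      case F: False
      hence km1: "k = m" using km by simp
      have "\<And>b. length b = m \<Longrightarrow> drop (k-1) b \<notin> Sub S \<Longrightarrow> b ! (m-1) \<notin> {S ! j | j. j < m - 1}"
      proof
        fix b :: "'a list" assume l: "length b = m" and n: "drop (k-1) b \<notin> Sub S"
          and "b ! (m-1) \<in> {S ! j | j. j < m - 1}"
        then obtain j where j: "j < m - 1" "b ! (m-1) = S ! j" by auto
        have "drop (k-1) b = [b ! (m-1)]" using l km1 False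
          by (metis Cons_nth_drop_Suc False One_nat_def Suc_pred diff_less drop_all le_refl neq0_conv zero_less_one)
        moreover have "sublist [S ! j] S" using j assms(3)
        proof -
          have "j < length S" using j assms(3) by simp
          hence "drop j S = S ! j # drop (Suc j) S" by (rule Cons_nth_drop_Suc[symmetric])
          hence "prefix [S ! j] (drop j S)" by simp
          moreover have "suffix (drop j S) S" by (rule suffix_drop)
          ultimately show ?thesis by (meson prefix_imp_sublist suffix_imp_sublist sublist_order.dual_order.trans)
        qed
        ultimately show False using n j by (simp add: Sub_def)
      qed
      hence "a ! (m-1) \<notin> {S ! j | j. j < m - 1}" "a' ! (m-1) \<notin> {S ! j | j. j < m - 1}"
        using assms(5,7) notin notin' by auto
      thus ?thesis using assms(3) by (auto simp add: g_BMH_def bc1_def Let_def)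
    qed
    show ?thesis using f g by simp
  qed
qed

end
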